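(* Let $n\geq 1$ and $x_1,\dots,x_n\in(0,\tfrac12]$. With $A_n,G_n,A'_n,G'_n$ as defined in the context, $$\left(\frac{A'_n}{G'_n}\right)^{A'_n+G'_n}\leq \left(\frac{A_n}{G_n}\right)^{A_n+G_n} \qquad\text{and}\qquad \left(\frac{A'_n}{G'_n}\right)^{A_n-G_n}\leq \left(\frac{A_n}{G_n}\right)^{A'_n-G'_n},$$ with equality in each if and only if $x_1=\cdots=x_n$.
   Context: $A_n=\frac1n\sum_{i=1}^n x_i$ and $G_n=\prod_{i=1}^n x_i^{1/n}$ are the arithmetic and geometric means of $x_1,\dots,x_n$; $A'_n=\frac1n\sum_{i=1}^n(1-x_i)$ and $G'_n=\prod_{i=1}^n(1-x_i)^{1/n}$ are the arithmetic and geometric means of $1-x_1,\dots,1-x_n$. *)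

theory Defs
  imports Complex_Main
begin

definition AM :: "nat \<Rightarrow> (nat \<Rightarrow> real) \<Rightarrow> real" where
  "AM n x = (\<Sum>i=1..n. x i) / real n"

definition GM :: "nat \<Rightarrow> (nat \<Rightarrow> real) \<Rightarrow> real" where
  "GM n x = (\<Prod>i=1..n. x i powr (1 / real n))"

end

theory Submission imports Defs begin

lemma ln_aux_f:
  fixes a b :: real assumes "0 < a" "a \<le> b"
  shows "(a - 1/a)/2 - ln a \<le> (b - 1/b)/2 - ln b"
proof (rule DERIV_nonneg_imp_nondecreasing[OF assms(2)])
  fix x :: real assume x: "a \<le> x" "x \<le> b"
  hence xp: "x > 0" using assms by simp
  have "DERIV (\<lambda>t. (t - 1/t)/2 - ln t) x :> ((1 + 1/x^2)/2 - 1/x)"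
    using xp by (auto intro!: derivative_eq_intros) (auto simp: field_simps power2_eq_square xp)
  moreover have "(1 + 1/x^2)/2 - 1/x = (1 - 1/x)^2/2" using xp by (simp add: field_simps power2_eq_square)
  ultimately show "\<exists>y. DERIV (\<lambda>t. (t - 1/t)/2 - ln t) x :> y \<and> y \<ge> 0" by auto
qed

lemma ln_aux_fs:
  fixes a b :: real assumes "0 < a" "a < b" "1 < a"
  shows "(a - 1/a)/2 - ln a < (b - 1/b)/2 - ln b"
proof (rule DERIV_pos_imp_increasing[OF assms(2)])
  fix x :: real assume x: "a \<le> x" "x \<le> b"
  hence xp: "x > 0" using assms by simp
  have "DERIV (\<lambda>t. (t - 1/t)/2 - ln t) x :> ((1 + 1/x^2)/2 - 1/x)"
    using xp by (auto intro!: derivative_eq_intros) (auto simp: field_simps power2_eq_square xp)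
  moreover have "(1 + 1/x^2)/2 - 1/x = (1 - 1/x)^2/2" using xp by (simp add: field_simps power2_eq_square)
  moreover have "(1 - 1/x)^2/2 > 0" using xp x assms by (auto simp: field_simps)
  ultimately show "\<exists>y. DERIV (\<lambda>t. (t - 1/t)/2 - ln t) x :> y \<and> y > 0"
    by auto
qed

lemma ln_aux_g:
  fixes a b :: real assumes "0 < a" "a \<le> b"
  shows "(b-1) - (b-1)^2/2 - ln b \<le> (a-1) - (a-1)^2/2 - ln a"
proof -
  have "-((a-1) - (a-1)^2/2 - ln a) \<le> -((b-1) - (b-1)^2/2 - ln b)"
  proof (rule DERIV_nonneg_imp_nondecreasing[OF assms(2)])
    fix x :: real assume x: "a \<le> x" "x \<le> b"
    hence xp: "x > 0" using assms by simp
    have "DERIV (\<lambda>t. -((t-1) - (t-1)^2/2 - ln t)) x :> -(1 - (x-1) - 1/x)"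
      using xp by (auto intro!: derivative_eq_intros) (auto simp: field_simps power2_eq_square xp)
    moreover have "-(1 - (x-1) - 1/x) = (x-1)^2/x" using xp by (simp add: field_simps power2_eq_square)
    ultimately show "\<exists>y. DERIV (\<lambda>t. -((t-1) - (t-1)^2/2 - ln t)) x :> y \<and> y \<ge> 0"
      using xp by fastforce
  qed
  thus ?thesis by simp
qed

lemma ln_L1: fixes t::real assumes "1 \<le> t" shows "ln t \<le> (t - 1/t)/2"
  using ln_aux_f[of 1 t] assms by simp
lemma ln_L1s: fixes t::real assumes "1 < t" shows "ln t < (t - 1/t)/2"
proof -
  have "0 \<le> ((1+t)/2 - 1/((1+t)/2))/2 - ln ((1+t)/2)"
    using ln_aux_f[of 1 "(1+t)/2"] assms by simp
  moreover have "((1+t)/2 - 1/((1+t)/2))/2 - ln ((1+t)/2) < (t - 1/t)/2 - ln t"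
    using ln_aux_fs[of "(1+t)/2" t] assms by simp
  ultimately show ?thesis by linarith
qed
lemma ln_L3: fixes t::real assumes "0 < t" "t \<le> 1" shows "(t - 1/t)/2 \<le> ln t"
  using ln_aux_f[of t 1] assms by simp
lemma ln_L2: fixes t::real assumes "0 < t" "t \<le> 1" shows "ln t \<le> (t-1) - (t-1)^2/2"
  using ln_aux_g[of t 1] assms by simp
lemma ln_L4: fixes t::real assumes "1 \<le> t" shows "(t-1) - (t-1)^2/2 \<le> ln t"
  using ln_aux_g[of 1 t] assms by simp

lemma P1: fixes z g M :: real assumes "0 < z" "z \<le> M" "0 < g" "g \<le> M"
  shows "(z - g)^2 / (2*M) \<le> z - g - g * ln (z/g)"
proof (cases "g \<le> z")
  case True
  have t: "1 \<le> z/g" using True assms by simp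
  have "ln (z/g) \<le> (z/g - g/z)/2" using ln_L1[OF t] by simp
  hence "g * ln (z/g) \<le> g * ((z/g - g/z)/2)" using assms by (simp add: mult_left_mono)
  also have "g * ((z/g - g/z)/2) = z - g - (z-g)^2/(2*z)" using assms by (simp add: field_simps power2_eq_square)
  finally have 1: "(z-g)^2/(2*z) \<le> z - g - g * ln (z/g)" by simp
  have "(z - g)^2 / (2*M) \<le> (z-g)^2/(2*z)" using assms by (intro divide_left_mono) auto
  with 1 show ?thesis by simp
next
  case False
  have t: "z/g \<le> 1" "0 < z/g" using False assms by auto
  have "g * ln (z/g) \<le> g * ((z/g-1) - (z/g-1)^2/2)" using ln_L2[OF t(2) t(1)] assms by (simp add: mult_left_mono)
  also have "g * ((z/g-1) - (z/g-1)^2/2) = z - g - (z-g)^2/(2*g)" using assms by (simp add: field_simps power2_eq_square)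
  finally have 1: "(z-g)^2/(2*g) \<le> z - g - g * ln (z/g)" by simp
  have "(z - g)^2 / (2*M) \<le> (z-g)^2/(2*g)" using assms by (intro divide_left_mono) auto
  with 1 show ?thesis by simp
qed

lemma P2: fixes z a m :: real assumes "0 < m" "m \<le> z" "m \<le> a"
  shows "z - a - a * ln (z/a) \<le> (z - a)^2 / (2*m)"
proof (cases "a \<le> z")
  case True
  have t: "1 \<le> z/a" using True assms by simp
  have "a * ((z/a-1) - (z/a-1)^2/2) \<le> a * ln (z/a)" using ln_L4[OF t] assms by (simp add: mult_left_mono)
  moreover have "a * ((z/a-1) - (z/a-1)^2/2) = z - a - (z-a)^2/(2*a)" using assms by (simp add: field_simps power2_eq_square)
  ultimately have 1: "z - a - a * ln (z/a) \<le> (z-a)^2/(2*a)" by simp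
  have "(z - a)^2 / (2*a) \<le> (z-a)^2/(2*m)" using assms by (intro divide_left_mono) auto
  with 1 show ?thesis by simp
next
  case False
  have t: "z/a \<le> 1" "0 < z/a" using False assms by auto
  have "a * ((z/a - a/z)/2) \<le> a * ln (z/a)" using ln_L3[OF t(2) t(1)] assms by (simp add: mult_left_mono)
  moreover have "a * ((z/a - a/z)/2) = z - a - (z-a)^2/(2*z)" using assms by (simp add: field_simps power2_eq_square)
  ultimately have 1: "z - a - a * ln (z/a) \<le> (z-a)^2/(2*z)" by simp
  have "(z - a)^2 / (2*z) \<le> (z-a)^2/(2*m)" using assms by (intro divide_left_mono) auto
  with 1 show ?thesis by simp
qed

lemma P3: fixes x y z :: real assumes "0 < x" "x < y" "y < z"
  shows "(ln y - ln x)/(y - x) > (ln z - ln x)/(z - x) \<and> (ln z - ln x)/(z - x) > (ln z - ln y)/(z - y)"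
proof -
  have a: "ln (x/y) < x/y - 1"
    using ln_le_minus_one[of "x/y"] ln_eq_minus_one[of "x/y"] assms by fastforce
  have b: "ln (z/y) < z/y - 1"
    using ln_le_minus_one[of "z/y"] ln_eq_minus_one[of "z/y"] assms by fastforce
  have a': "ln y - ln x > (y - x)/y" using a assms by (simp add: ln_div field_simps)
  have b': "ln z - ln y < (z - y)/y" using b assms by (simp add: ln_div field_simps)
  define s1 where "s1 = (ln y - ln x)/(y - x)"
  define s2 where "s2 = (ln z - ln y)/(z - y)"
  have s1: "s1 > 1/y" using a' assms unfolding s1_def by (simp add: field_simps)
  have s2: "s2 < 1/y" using b' assms unfolding s2_def by (simp add: field_simps)
  have e: "ln z - ln x = s1*(y-x) + s2*(z-y)" using assms unfolding s1_def s2_def by simp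
  have "(ln z - ln x)/(z-x) < s1"
  proof -
    have "s2*(z-y) < s1*(z-y)" using s1 s2 assms by simp
    hence "ln z - ln x < s1*(z-x)" using e by (simp add: algebra_simps)
    thus ?thesis using assms by (simp add: field_simps)
  qed
  moreover have "(ln z - ln x)/(z-x) > s2"
  proof -
    have "s2*(y-x) < s1*(y-x)" using s1 s2 assms by simp
    hence "ln z - ln x > s2*(z-x)" using e by (simp add: algebra_simps)
    thus ?thesis using assms by (simp add: field_simps)
  qed
  ultimately show ?thesis unfolding s1_def s2_def by simp
qed

lemma P4: fixes s t :: real assumes "1 < s" "s < t"
  shows "(s+1)*ln s/(s-1) < (t+1)*ln t/(t-1)"
proof (rule DERIV_pos_imp_increasing[OF assms(2)])
  fix x :: real assume x: "s \<le> x" "x \<le> t"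
  hence xp: "x > 1" using assms by simp
  have "DERIV (\<lambda>u. (u+1)*ln u/(u-1)) x :> ((ln x + (x+1)/x)*(x-1) - (x+1)*ln x)/(x-1)^2"
    using xp by (auto intro!: derivative_eq_intros) (auto simp: field_simps power2_eq_square)
  moreover have "((ln x + (x+1)/x)*(x-1) - (x+1)*ln x)/(x-1)^2 = ((x - 1/x) - 2*ln x)/(x-1)^2"
    using xp by (simp add: field_simps power2_eq_square)
  moreover have "((x - 1/x) - 2*ln x)/(x-1)^2 > 0" using ln_L1s[OF xp] xp by simp
  ultimately show "\<exists>y. DERIV (\<lambda>u. (u+1)*ln u/(u-1)) x :> y \<and> y > 0" by auto
qed


lemma GM_facts:
  assumes n: "n \<ge> 1" and z: "\<And>i. i \<in> {1..n} \<Longrightarrow> 0 < z i"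
  shows "GM n z > 0" "ln (GM n z) = (\<Sum>i=1..n. ln (z i)) / real n"
proof -
  show "GM n z > 0" unfolding GM_def
  proof (intro prod_pos)
    fix i assume "i \<in> {1..n}" thus "0 < z i powr (1/real n)" using z[of i] by simp
  qed
  have "ln (GM n z) = (\<Sum>i=1..n. ln (z i powr (1/real n)))"
    unfolding GM_def
  proof (subst ln_prod)
    fix i assume "i \<in> {1..n}" thus "z i powr (1/real n) \<noteq> 0" using z[of i] by simp
  qed auto
  also have "\<dots> = (\<Sum>i=1..n. ln (z i)) / real n"
    by (simp add: sum_divide_distrib)
  finally show "ln (GM n z) = (\<Sum>i=1..n. ln (z i)) / real n" .
qed

lemma GM_le:
  assumes n: "n \<ge> 1" and z: "\<And>i. i \<in> {1..n} \<Longrightarrow> 0 < z i \<and> z i \<le> M"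
  shows "GM n z \<le> M"
proof -
  have M: "M > 0" using z[of 1] n by auto
  have "GM n z \<le> (\<Prod>i=1..n. M powr (1/real n))" unfolding GM_def
  proof (intro prod_mono conjI)
    fix i assume "i \<in> {1..n}" thus "0 \<le> z i powr (1/real n)" "z i powr (1/real n) \<le> M powr (1/real n)"
      using z[of i] by (auto intro: powr_mono2)
  qed
  also have "\<dots> = (M powr (1/real n)) ^ n" by simp
  also have "\<dots> = M powr (1/real n * real n)" using M by (simp add: powr_realpow[symmetric] powr_powr)
  also have "\<dots> = M" using n M by simp
  finally show ?thesis .
qed

lemma sq_dev:
  assumes n: "n \<ge> 1"
  shows "(\<Sum>i=1..n. (z i - g)^2) = (\<Sum>i=1..n. (z i - AM n z)^2) + real n * (AM n z - g)^2"
proof -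
  let ?a = "AM n z"
  have s: "(\<Sum>i=1..n. z i) = real n * ?a" using n unfolding AM_def by simp
  have "(\<Sum>i=1..n. (z i - g)^2) = (\<Sum>i=1..n. (z i - ?a)^2 + 2*(?a - g)*z i - 2*(?a-g)*?a + (?a-g)^2)"
    by (intro sum.cong) (auto simp: power2_eq_square algebra_simps)
  also have "\<dots> = (\<Sum>i=1..n. (z i - ?a)^2) + 2*(?a-g)*(\<Sum>i=1..n. z i) - real n*(2*(?a-g)*?a) + real n*(?a-g)^2"
    by (simp add: sum.distrib sum_subtractf sum_distrib_left)
  also have "\<dots> = (\<Sum>i=1..n. (z i - ?a)^2) + real n * (?a - g)^2" using s by simp
  finally show ?thesis .
qed

lemma lower:
  assumes n: "n \<ge> 1" and z: "\<And>i. i \<in> {1..n} \<Longrightarrow> 0 < z i \<and> z i \<le> M"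
  shows "(\<Sum>i=1..n. (z i - AM n z)^2) / (real n * (2*M)) \<le> AM n z - GM n z"
proof -
  let ?a = "AM n z" let ?g = "GM n z"
  have M: "M > 0" using z[of 1] n by auto
  have gp: "?g > 0" and lg: "ln ?g = (\<Sum>i=1..n. ln (z i)) / real n" using GM_facts[of n z] n z by auto
  have gM: "?g \<le> M" using GM_le[of n z M] n z by auto
  have s: "(\<Sum>i=1..n. z i) = real n * ?a" using n unfolding AM_def by simp
  have "(\<Sum>i=1..n. (z i - ?g)^2 / (2*M)) \<le> (\<Sum>i=1..n. z i - ?g - ?g * ln (z i / ?g))"
    using z gp gM by (intro sum_mono P1) auto
  also have "(\<Sum>i=1..n. z i - ?g - ?g * ln (z i / ?g)) = (\<Sum>i=1..n. z i - ?g - ?g * ln (z i) + ?g * ln ?g)"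
  proof (intro sum.cong refl)
    fix i assume "i \<in> {1..n}" thus "z i - ?g - ?g * ln (z i / ?g) = z i - ?g - ?g * ln (z i) + ?g * ln ?g"
      using z[of i] gp by (simp add: ln_div algebra_simps)
  qed
  also have "\<dots> = (\<Sum>i=1..n. z i) - real n * ?g - ?g * (\<Sum>i=1..n. ln (z i)) + real n * (?g * ln ?g)"
    by (simp add: sum.distrib sum_subtractf sum_distrib_left)
  also have "\<dots> = real n * (?a - ?g)" using s lg n by (simp add: algebra_simps)
  finally have 1: "(\<Sum>i=1..n. (z i - ?g)^2) / (2*M) \<le> real n * (?a - ?g)"
    by (simp add: sum_divide_distrib)
  have "(\<Sum>i=1..n. (z i - ?a)^2) \<le> (\<Sum>i=1..n. (z i - ?g)^2)" using sq_dev[OF n, of z ?g] by simp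
  hence "(\<Sum>i=1..n. (z i - ?a)^2) / (2*M) \<le> real n * (?a - ?g)" using 1 M
    by (meson divide_right_mono less_eq_real_def order_trans zero_less_mult_iff zero_less_numeral)
  thus ?thesis using n M by (simp add: field_simps)
qed

lemma upper:
  assumes n: "n \<ge> 1" and m: "m > 0" and z: "\<And>i. i \<in> {1..n} \<Longrightarrow> m \<le> z i"
  shows "AM n z - GM n z \<le> (\<Sum>i=1..n. (z i - AM n z)^2) / (real n * (2*m))"
proof -
  let ?a = "AM n z" let ?g = "GM n z"
  have zp: "\<And>i. i \<in> {1..n} \<Longrightarrow> 0 < z i" using z m by fastforce
  have gp: "?g > 0" and lg: "ln ?g = (\<Sum>i=1..n. ln (z i)) / real n" using GM_facts[of n z] n zp by auto
  have s: "(\<Sum>i=1..n. z i) = real n * ?a" using n unfolding AM_def by simp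
  have "real n * m \<le> (\<Sum>i=1..n. z i)" using sum_mono[of "{1..n}" "\<lambda>_. m" z] z by simp
  hence am: "m \<le> ?a" using s n by simp
  have ap: "?a > 0" using am m by simp
  have "(\<Sum>i=1..n. z i - ?a - ?a * ln (z i / ?a)) \<le> (\<Sum>i=1..n. (z i - ?a)^2 / (2*m))"
    using z am m by (intro sum_mono P2) auto
  moreover have "(\<Sum>i=1..n. z i - ?a - ?a * ln (z i / ?a)) = (\<Sum>i=1..n. z i - ?a - ?a * ln (z i) + ?a * ln ?a)"
  proof (intro sum.cong refl)
    fix i assume "i \<in> {1..n}" thus "z i - ?a - ?a * ln (z i / ?a) = z i - ?a - ?a * ln (z i) + ?a * ln ?a"
      using zp[of i] ap by (simp add: ln_div algebra_simps)
  qed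
  moreover have "\<dots> = (\<Sum>i=1..n. z i) - real n * ?a - ?a * (\<Sum>i=1..n. ln (z i)) + real n * (?a * ln ?a)"
    by (simp add: sum.distrib sum_subtractf sum_distrib_left)
  moreover have "\<dots> = real n * (?a * (ln ?a - ln ?g))" using s lg n by (simp add: algebra_simps)
  ultimately have 1: "real n * (?a * (ln ?a - ln ?g)) \<le> (\<Sum>i=1..n. (z i - ?a)^2) / (2*m)"
    by (simp add: sum_divide_distrib)
  have "ln (?g / ?a) \<le> ?g / ?a - 1" using ln_le_minus_one gp ap by simp
  hence "?a * (ln ?g - ln ?a) \<le> ?g - ?a" using gp ap by (simp add: ln_div field_simps)
  hence "real n * (?a - ?g) \<le> real n * (?a * (ln ?a - ln ?g))" using n
    by (intro mult_left_mono) (auto simp: algebra_simps)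
  with 1 have "real n * (?a - ?g) \<le> (\<Sum>i=1..n. (z i - ?a)^2) / (2*m)" by linarith
  thus ?thesis using n m by (simp add: field_simps)
qed


lemma const_means:
  assumes n: "n \<ge> 1" and c: "c > 0" and z: "\<And>i. i \<in> {1..n} \<Longrightarrow> z i = c"
  shows "GM n z = c" "AM n z = c"
proof -
  have "GM n z = (\<Prod>i=1..n. c powr (1/real n))" unfolding GM_def using z by (intro prod.cong) auto
  also have "\<dots> = (c powr (1/real n)) ^ n" by simp
  also have "\<dots> = c powr (1/real n * real n)" using c by (simp add: powr_realpow[symmetric] powr_powr)
  also have "\<dots> = c" using n c by simp
  finally show "GM n z = c" .
  have "(\<Sum>i=1..n. z i) = (\<Sum>i=1..n. c)" using z by (intro sum.cong) auto
  thus "AM n z = c" unfolding AM_def using n by simp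
qed

lemma chi_eq: fixes a g L :: real assumes "g > 0" "a - g > 0"
  shows "(a + g) * L = (a - g) * ((a/g + 1) * L / (a/g - 1))"
proof -
  have "a/g - 1 = (a - g)/g" using assms by (simp add: field_simps)
  moreover have "a/g + 1 = (a + g)/g" using assms by (simp add: field_simps)
  ultimately show ?thesis using assms by simp
qed

theorem mainTheorem7:
  fixes n :: nat and x :: "nat \<Rightarrow> real"
  assumes "n \<ge> 1"
    and "\<And>i. i \<in> {1..n} \<Longrightarrow> 0 < x i \<and> x i \<le> 1/2"
  shows "((AM n (\<lambda>i. 1 - x i) / GM n (\<lambda>i. 1 - x i)) powr (AM n (\<lambda>i. 1 - x i) + GM n (\<lambda>i. 1 - x i))
           \<le> (AM n x / GM n x) powr (AM n x + GM n x)) \<and>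
         ((AM n (\<lambda>i. 1 - x i) / GM n (\<lambda>i. 1 - x i)) powr (AM n (\<lambda>i. 1 - x i) + GM n (\<lambda>i. 1 - x i))
           = (AM n x / GM n x) powr (AM n x + GM n x)
         \<longleftrightarrow> (\<forall>i\<in>{1..n}. \<forall>j\<in>{1..n}. x i = x j)) \<and>
         ((AM n (\<lambda>i. 1 - x i) / GM n (\<lambda>i. 1 - x i)) powr (AM n x - GM n x)
           \<le> (AM n x / GM n x) powr (AM n (\<lambda>i. 1 - x i) - GM n (\<lambda>i. 1 - x i))) \<and>
         ((AM n (\<lambda>i. 1 - x i) / GM n (\<lambda>i. 1 - x i)) powr (AM n x - GM n x)
           = (AM n x / GM n x) powr (AM n (\<lambda>i. 1 - x i) - GM n (\<lambda>i. 1 - x i))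
         \<longleftrightarrow> (\<forall>i\<in>{1..n}. \<forall>j\<in>{1..n}. x i = x j))"
proof -
  note n = assms(1) and xb = assms(2)
  define y where "y = (\<lambda>i. 1 - x i)"
  define A where "A = AM n x"
  define G where "G = GM n x"
  define A' where "A' = AM n y"
  define G' where "G' = GM n y"
  define E where "E = (\<forall>i\<in>{1..n}. \<forall>j\<in>{1..n}. x i = x j)"
  have yb: "\<And>i. i \<in> {1..n} \<Longrightarrow> 1/2 \<le> y i \<and> y i < 1" using xb unfolding y_def by fastforce
  have ypos: "\<And>i. i \<in> {1..n} \<Longrightarrow> 0 < y i \<and> y i \<le> 1" using yb by fastforce
  have sx: "(\<Sum>i=1..n. x i) = real n * A" using n unfolding A_def AM_def by simp
  have A'A: "A' = 1 - A"
  proof -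
    have "(\<Sum>i=1..n. y i) = real n - (\<Sum>i=1..n. x i)" unfolding y_def by (simp add: sum_subtractf)
    thus ?thesis using n sx unfolding A'_def AM_def by (simp add: field_simps)
  qed
  have Gp: "G > 0" unfolding G_def using GM_facts(1)[of n x] n xb by auto
  have G'p: "G' > 0" unfolding G'_def using GM_facts(1)[of n y] n ypos by auto
  have "0 < (\<Sum>i=1..n. x i)"
  proof (rule sum_pos)
    show "{1..n} \<noteq> {}" using n by simp
  qed (use xb in auto)
  hence Ap: "A > 0" using sx n by (simp add: zero_less_mult_iff)
  have "(\<Sum>i=1..n. x i) \<le> (\<Sum>i=1..n. 1/2)" using xb by (intro sum_mono) auto
  hence Ah: "A \<le> 1/2" using sx n by simp
  have GG': "G \<le> G'" unfolding G_def G'_def GM_def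
  proof (intro prod_mono conjI)
    fix i assume "i \<in> {1..n}" thus "0 \<le> x i powr (1/real n)" "x i powr (1/real n) \<le> y i powr (1/real n)"
      using xb[of i] unfolding y_def by (auto intro: powr_mono2)
  qed
  show ?thesis
  proof (cases E)
    case True
    have one: "1 \<in> {1..n}" using n by simp
    have c: "\<And>i. i \<in> {1..n} \<Longrightarrow> x i = x 1" using True one unfolding E_def by blast
    have x1: "0 < x 1" "x 1 \<le> 1/2" using xb[of 1] n by auto
    have "G = x 1" "A = x 1" unfolding G_def A_def using const_means[OF n x1(1) c] by auto
    hence r1: "A/G = 1" using x1 by simp
    have x1': "0 < 1 - x 1" using x1 by simp
    have cy: "\<And>i. i \<in> {1..n} \<Longrightarrow> y i = 1 - x 1" unfolding y_def using c by metis
    have "G' = 1 - x 1" "A' = 1 - x 1" unfolding G'_def A'_def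
      using const_means[OF n x1' cy] by auto
    hence r2: "A'/G' = 1" using x1' by simp
    have "(A'/G') powr (A' + G') \<le> (A/G) powr (A + G) \<and>
       ((A'/G') powr (A' + G') = (A/G) powr (A + G) \<longleftrightarrow> E) \<and>
       (A'/G') powr (A - G) \<le> (A/G) powr (A' - G') \<and>
       ((A'/G') powr (A - G) = (A/G) powr (A' - G') \<longleftrightarrow> E)" using True r1 r2 by simp
    thus ?thesis by (simp only: A_def G_def A'_def G'_def y_def E_def)
  next
    case False
    define V where "V = (\<Sum>i=1..n. (x i - A)^2)"
    have Vy: "(\<Sum>i=1..n. (y i - A')^2) = V" unfolding V_def y_def A'A
      by (intro sum.cong) (auto simp: power2_eq_square algebra_simps)
    have V0: "V \<ge> 0" unfolding V_def by (intro sum_nonneg) auto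
    have "V \<noteq> 0"
    proof
      assume "V = 0"
      hence "\<forall>i\<in>{1..n}. (x i - A)^2 = 0" unfolding V_def by (subst (asm) sum_nonneg_eq_0_iff) auto
      hence "E" unfolding E_def by auto
      with False show False by simp
    qed
    hence Vp: "V > 0" using V0 by simp
    have L1: "V / (real n * 1) \<le> A - G" using lower[OF n, of x "1/2"] xb unfolding V_def A_def G_def by simp
    have L2: "V / (real n * 2) \<le> A' - G'" using lower[OF n, of y 1] ypos Vy unfolding A'_def G'_def by simp
    have U2: "A' - G' \<le> V / (real n * 1)" using upper[OF n, of "1/2" y] yb Vy unfolding A'_def G'_def by simp
    have np: "real n > 0" using n by simp
    have "V / (real n * 1) > 0" "V / (real n * 2) > 0" using Vp np by auto
    hence D: "A - G > 0" and D': "A' - G' > 0" using L1 L2 by linarith+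
    have DD: "A' - G' \<le> A - G" using L1 U2 by simp
    have AA: "A < A'"
    proof (rule ccontr)
      assume "\<not> A < A'"
      hence "A = 1/2" using A'A Ah by simp
      hence "(\<Sum>i=1..n. 1/2 - x i) = 0" using sx by (simp add: sum_subtractf)
      hence "\<forall>i\<in>{1..n}. 1/2 - x i = 0" using xb by (subst (asm) sum_nonneg_eq_0_iff) auto
      hence "\<forall>i\<in>{1..n}. x i = 1/2" by auto
      hence "E" unfolding E_def by (metis (no_types))
      with False show False by simp
    qed
    define T where "T = A / G"
    define T' where "T' = A' / G'"
    have T1: "T > 1" unfolding T_def using D Gp by simp
    have T'1: "T' > 1" unfolding T'_def using D' G'p by simp
    have "(A' - G')/A' < (A - G)/A" 
    proof -
      have "(A' - G')/A' \<le> (A - G)/A'" using DD AA Ap by (simp add: divide_right_mono)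
      also have "\<dots> < (A - G)/A" using D AA Ap by (simp add: divide_strict_left_mono)
      finally show ?thesis .
    qed
    moreover have "(A' - G')/A' = 1 - 1/T'" unfolding T'_def using Ap AA G'p by (simp add: diff_divide_distrib)
    moreover have "(A - G)/A = 1 - 1/T" unfolding T_def using Ap Gp by (simp add: diff_divide_distrib)
    ultimately have "1/T < 1/T'" by simp
    hence TT: "T' < T" using T1 T'1 by (smt (verit) frac_le zero_less_one)
    have e1: "(A + G) * ln T = (A - G) * ((T+1)*ln T/(T-1))"
      unfolding T_def using chi_eq[OF Gp D] .
    have e1': "(A' + G') * ln T' = (A' - G') * ((T'+1)*ln T'/(T'-1))"
      unfolding T'_def using chi_eq[OF G'p D'] .
    have chip: "(T'+1)*ln T'/(T'-1) > 0" using T'1 by simp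
    have I1: "(A' + G') * ln T' < (A + G) * ln T"
    proof -
      have "(A' - G') * ((T'+1)*ln T'/(T'-1)) \<le> (A - G) * ((T'+1)*ln T'/(T'-1))"
        using DD chip by (intro mult_right_mono) auto
      also have "\<dots> < (A - G) * ((T+1)*ln T/(T-1))" using P4[OF T'1 TT] D by (intro mult_strict_left_mono) auto
      finally show ?thesis using e1 e1' by simp
    qed
    have I2: "(A - G) * ln T' < (A' - G') * ln T"
    proof -
      have s1: "(ln A' - ln G')/(A' - G') \<le> (ln A' - ln G)/(A' - G)"
      proof (cases "G = G'")
        case True thus ?thesis by simp
      next
        case False
        hence "G < G'" using GG' by simp
        thus ?thesis using P3[of G G' A'] Gp D' by simp
      qed
      also have "\<dots> < (ln A - ln G)/(A - G)" using P3[of G A A'] Gp D AA by simp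
      finally have "(ln A' - ln G')/(A' - G') < (ln A - ln G)/(A - G)" .
      hence "ln T'/(A' - G') < ln T/(A - G)" unfolding T_def T'_def using Gp G'p Ap AA
        by (simp add: ln_div)
      thus ?thesis using D D' by (simp add: divide_less_eq less_divide_eq mult.commute)
    qed
    have Tp: "T > 0" "T' > 0" using T1 T'1 by auto
    have R1: "T' powr (A' + G') < T powr (A + G)" using I1 Tp by (simp add: powr_def mult.commute)
    have R2: "T' powr (A - G) < T powr (A' - G')" using I2 Tp by (simp add: powr_def mult.commute)
    have "(A'/G') powr (A' + G') \<le> (A/G) powr (A + G) \<and>
       ((A'/G') powr (A' + G') = (A/G) powr (A + G) \<longleftrightarrow> E) \<and>
       (A'/G') powr (A - G) \<le> (A/G) powr (A' - G') \<and>
       ((A'/G') powr (A - G) = (A/G) powr (A' - G') \<longleftrightarrow> E)" using R1 R2 False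
      unfolding T_def T'_def by auto
    thus ?thesis by (simp only: A_def G_def A'_def G'_def y_def E_def)
  qed
qed

end
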